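(* Let $(X_m)_{m\in\mathbb Z}$ and $(Y_m)_{m\in\mathbb Z}$ be homogeneous second order recurrence sequences with constant coefficients that possess the same recurrence relation. For integers $a,b,c,d,e$ put $$\Delta_{xy}=X_{d-a}Y_{e-b}-X_{e-a}Y_{d-b},\quad \Delta_1=X_{d-c}Y_{e-b}-X_{e-c}Y_{d-b},\quad \Delta_2=X_{d-a}X_{e-c}-X_{e-a}X_{d-c},$$ and suppose $\Delta_{xy}\neq0$, $\Delta_1\neq0$, $\Delta_2\neq 0$. Then for all integers $m$ and $k$, $$\sum_{r=0}^k\left(\frac{\Delta_{xy}}{\Delta_1}\right)^r Y_{m-k(a-c)-b+c+(a-c)r}=\frac{\Delta_{xy}}{\Delta_2}\left(\frac{\Delta_{xy}}{\Delta_1}\right)^kX_m-\frac{\Delta_1}{\Delta_2}X_{m-(k+1)(a-c)}.$$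
   Context: A homogeneous second order recurrence sequence with constant coefficients is a sequence $(X_m)_{m\in\mathbb Z}$ of complex numbers for which there are constants $p,q\in\mathbb C$, $q\neq 0$, with $X_m=pX_{m-1}+qX_{m-2}$ for all $m\in\mathbb Z$. Two such sequences possess the same recurrence relation if they satisfy it with the same constants $p,q$. Summation convention: for an integer $k<0$, $\sum_{r=0}^k f_r$ means $-\sum_{r=k+1}^{-1} f_r$ (in particular it equals $0$ when $k=-1$). *)

theory Defs
  imports Complex_Main
begin

definition is_rec2 :: "complex \<Rightarrow> complex \<Rightarrow> (int \<Rightarrow> complex) \<Rightarrow> bool" where
  "is_rec2 p q X \<longleftrightarrow> q \<noteq> 0 \<and> (\<forall>m::int. X m = p * X (m - 1) + q * X (m - 2))"

definition isum :: "(int \<Rightarrow> complex) \<Rightarrow> int \<Rightarrow> complex" where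
  "isum f k = (if 0 \<le> k then (\<Sum>r\<in>{0..k}. f r) else - (\<Sum>r\<in>{k+1..-1}. f r))"

end

theory Submission
  imports Defs
begin

lemma rec_zero:
  assumes "is_rec2 p q Z" "Z s = 0" "Z (s+1) = 0"
  shows "Z n = 0"
proof -
  have H: "q \<noteq> 0 \<and> (\<forall>m. Z m = p * Z (m - 1) + q * Z (m - 2))"
    using assms(1) unfolding is_rec2_def .
  have q: "q \<noteq> 0" using H by blast
  have R: "\<And>m. Z m = p * Z (m - 1) + q * Z (m - 2)" using H by blast
  have up: "Z n = 0 \<and> Z (n+1) = 0" if "s \<le> n" for n
    using that
  proof (induction n rule: int_ge_induct)
    case base then show ?case using assms by simp
  next
    case (step i)
    have "Z (i+2) = p * Z (i+1) + q * Z i" using R[of "i+2"] by (simp add: algebra_simps)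
    then show ?case using step by (simp add: add.assoc)
  qed
  have down: "Z n = 0 \<and> Z (n+1) = 0" if "n \<le> s" for n
    using that
  proof (induction n rule: int_le_induct)
    case base then show ?case using assms by simp
  next
    case (step i)
    have "Z (i+1) = p * Z i + q * Z (i - 1)" using R[of "i+1"] by (simp add: algebra_simps)
    then have "q * Z (i - 1) = 0" using step by simp
    then show ?case using step q by simp
  qed
  show ?thesis using up down by (cases "s \<le> n") auto
qed

lemma rec_shift: "is_rec2 p q X \<Longrightarrow> is_rec2 p q (\<lambda>n. X (n - a))"
  unfolding is_rec2_def
  by (metis (no_types, lifting) diff_diff_eq2 diff_right_commute)

definition Phi :: "(int \<Rightarrow> complex) \<Rightarrow> (int \<Rightarrow> complex) \<Rightarrow> (int \<Rightarrow> complex) \<Rightarrow> int \<Rightarrow> int \<Rightarrow> int \<Rightarrow> complex" where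
  "Phi A B C i j k = A i * (B j * C k - B k * C j) - B i * (A j * C k - A k * C j)
     + C i * (A j * B k - A k * B j)"

lemma Phi_lin_k:
  assumes "A k = p * A k1 + q * A k2" "B k = p * B k1 + q * B k2" "C k = p * C k1 + q * C k2"
  shows "Phi A B C i j k = p * Phi A B C i j k1 + q * Phi A B C i j k2"
  unfolding Phi_def assms by (simp add: algebra_simps)

lemma Phi_lin_j:
  assumes "A k = p * A k1 + q * A k2" "B k = p * B k1 + q * B k2" "C k = p * C k1 + q * C k2"
  shows "Phi A B C i k j = p * Phi A B C i k1 j + q * Phi A B C i k2 j"
  unfolding Phi_def assms by (simp add: algebra_simps)

lemma Phi_zero:
  assumes A: "is_rec2 p q A" and B: "is_rec2 p q B" and C: "is_rec2 p q C"
  shows "Phi A B C i j k = 0"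
proof -
  have RA: "\<And>m. A m = p * A (m - 1) + q * A (m - 2)"
   and RB: "\<And>m. B m = p * B (m - 1) + q * B (m - 2)"
   and RC: "\<And>m. C m = p * C (m - 1) + q * C (m - 2)" and q: "q \<noteq> 0"
    using A B C unfolding is_rec2_def by (blast, blast, blast, blast)
  have reck: "is_rec2 p q (\<lambda>k. Phi A B C i j k)" for i j
    unfolding is_rec2_def using q
    by (intro conjI allI q Phi_lin_k[OF RA RB RC])
  have recj: "is_rec2 p q (\<lambda>j. Phi A B C i j k)" for i k
    unfolding is_rec2_def using q
    by (intro conjI allI q Phi_lin_j[OF RA RB RC])
  have z1: "Phi A B C i (i+1) k = 0" for i k
    by (rule rec_zero[OF reck, of i]) (simp_all add: Phi_def algebra_simps)
  have "Phi A B C i (k+1) k = - Phi A B C k (k+1) i"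
    by (simp add: Phi_def algebra_simps)
  then have zk: "Phi A B C i (k+1) k = 0" using z1 by simp
  have zk0: "Phi A B C i k k = 0" by (simp add: Phi_def algebra_simps)
  have "(\<lambda>j. Phi A B C i j k) j = 0"
    by (rule rec_zero[OF recj[of i k], where s=k]) (simp_all only: zk zk0)
  then show ?thesis by simp
qed

lemma tele_pos: "0 \<le> (k::int) \<Longrightarrow> (\<Sum>r\<in>{0..k}. G (r+1) - G r) = (G (k+1) - G 0 :: complex)"
proof (induction k rule: int_ge_induct)
  case base then show ?case by simp
next
  case (step i)
  have "{0..i+1} = insert (i+1) {0..i}" using step by auto
  then show ?case using step by simp
qed

lemma tele_neg: "(j::int) \<le> 0 \<Longrightarrow> (\<Sum>r\<in>{j..-1}. G (r+1) - G r) = (G 0 - G j :: complex)"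
proof (induction j rule: int_le_induct)
  case base then show ?case by simp
next
  case (step i)
  have "{i-1..-1} = insert (i-1) {i..-1}" using step by auto
  then show ?case using step by simp
qed

lemma isum_tele: "(\<And>r. f r = G (r+1) - G r) \<Longrightarrow> isum f k = G (k+1) - G 0"
  unfolding isum_def using tele_pos[of k G] tele_neg[of "k+1" G] by auto

theorem lemma4:
  fixes X Y :: "int \<Rightarrow> complex" and p q :: complex and a b c d e :: int
  assumes hX: "is_rec2 p q X" and hY: "is_rec2 p q Y"
    and hxy: "X (d - a) * Y (e - b) - X (e - a) * Y (d - b) \<noteq> 0"
    and h1: "X (d - c) * Y (e - b) - X (e - c) * Y (d - b) \<noteq> 0"
    and h2: "X (d - a) * X (e - c) - X (e - a) * X (d - c) \<noteq> 0"
  shows "\<forall>m k :: int.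
    (let Dxy = X (d - a) * Y (e - b) - X (e - a) * Y (d - b);
         D1 = X (d - c) * Y (e - b) - X (e - c) * Y (d - b);
         D2 = X (d - a) * X (e - c) - X (e - a) * X (d - c)
     in isum (\<lambda>r. (Dxy / D1) powi r * Y (m - k * (a - c) - b + c + (a - c) * r)) k
        = Dxy / D2 * (Dxy / D1) powi k * X m - D1 / D2 * X (m - (k + 1) * (a - c)))"
proof (intro allI)
  fix m k
  define Dxy where "Dxy = X (d - a) * Y (e - b) - X (e - a) * Y (d - b)"
  define D1 where "D1 = X (d - c) * Y (e - b) - X (e - c) * Y (d - b)"
  define D2 where "D2 = X (d - a) * X (e - c) - X (e - a) * X (d - c)"
  define u where "u = a - c"
  define \<rho> where "\<rho> = Dxy / D1"
  have nz: "Dxy \<noteq> 0" "D1 \<noteq> 0" "D2 \<noteq> 0" using hxy h1 h2 by (auto simp: Dxy_def D1_def D2_def)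
  have rho0: "\<rho> \<noteq> 0" using nz by (simp add: \<rho>_def)
  have dx: "Dxy = D1 * \<rho>" using nz by (simp add: \<rho>_def)
  have base: "D2 * Y (n - b) = Dxy * X (n - c) - D1 * X (n - a)" for n
  proof -
    have "Phi (\<lambda>n. X (n - a)) (\<lambda>n. X (n - c)) (\<lambda>n. Y (n - b)) d e n = 0"
      by (rule Phi_zero[OF rec_shift[OF hX] rec_shift[OF hX] rec_shift[OF hY]])
    then show ?thesis unfolding Phi_def Dxy_def D1_def D2_def
      by (simp add: algebra_simps)
  qed
  have base2: "Y (n' - b + c) = (Dxy * X n' - D1 * X (n' - u)) / D2" for n'
  proof -
    have i: "n'+c-b = n'-b+c" "n'+c-c = n'" "n'+c-a = n'-u" by (simp_all add: u_def)
    have "D2 * Y (n'-b+c) = Dxy * X n' - D1 * X (n'-u)" using base[of "n'+c"] unfolding i .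
    then show ?thesis using nz by (simp add: eq_divide_eq mult.commute)
  qed
  define G where "G r = D1 / D2 * \<rho> powi r * X (m - (k - r + 1) * u)" for r
  have trm: "\<rho> powi r * Y (m - k * u - b + c + u * r) = G (r+1) - G r" for r
  proof -
    have e1: "m - k * u - b + c + u * r = (m - (k - r) * u) - b + c" by (simp add: algebra_simps)
    have e2: "m - (k - r) * u - u = m - (k - r + 1) * u" by (simp add: algebra_simps)
    have e3: "m - (k - (r + 1) + 1) * u = m - (k - r) * u" by (simp add: algebra_simps)
    have pw: "\<rho> powi (r+1) = \<rho> powi r * \<rho>" using rho0 by (simp add: power_int_add)
    show ?thesis unfolding e1 base2 G_def e3 pw e2 dx using nz
      by (simp add: field_simps)
  qed
  have "isum (\<lambda>r. \<rho> powi r * Y (m - k * u - b + c + u * r)) k = G (k+1) - G 0"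
    apply (rule isum_tele) by (rule trm)
  moreover have "G (k+1) - G 0 = Dxy / D2 * \<rho> powi k * X m - D1 / D2 * X (m - (k + 1) * u)"
  proof -
    have "G (k+1) = D1/D2 * (\<rho> powi k * \<rho>) * X m" unfolding G_def by (simp add: power_int_add rho0)
    moreover have "G 0 = D1/D2 * X (m - (k + 1) * u)" unfolding G_def by simp
    ultimately show ?thesis unfolding dx by simp
  qed
  ultimately show "let Dxy = X (d - a) * Y (e - b) - X (e - a) * Y (d - b);
         D1 = X (d - c) * Y (e - b) - X (e - c) * Y (d - b);
         D2 = X (d - a) * X (e - c) - X (e - a) * X (d - c)
     in isum (\<lambda>r. (Dxy / D1) powi r * Y (m - k * (a - c) - b + c + (a - c) * r)) k
        = Dxy / D2 * (Dxy / D1) powi k * X m - D1 / D2 * X (m - (k + 1) * (a - c))"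
    unfolding Let_def Dxy_def[symmetric] D1_def[symmetric] D2_def[symmetric] \<rho>_def[symmetric] u_def[symmetric]
    by simp
qed

end
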